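(* Let $\gamma:J\to{\rm AdS}$ be a stationary curve of the LIEN flow, with evolution $(s,t)\mapsto A(t)\gamma(s+2\ell t)B(t)^{-1}$ for some $\ell\in\mathbb{R}$. Then its bending $\kappa$ satisfies $$\kappa'''+2\ell\kappa'-6\kappa\kappa'=0,$$ and the bending of its evolution is the traveling wave $\kappa(s+2\ell t)$, a solution of the KdV equation $\partial_t\kappa+\partial_s^3\kappa-6\kappa\partial_s\kappa=0$.
   Context: ${\rm AdS}={\rm SL}(2,\mathbb{R})$ with the metric induced by the polarization of $q(X)=-\det X$. Null curves are future-directed, without inflection points, parametrized by proper time ($\langle\gamma'',\gamma''\rangle=4$), with bending $\kappa=-\frac1{16}\langle\gamma''',\gamma'''\rangle$, $T=\gamma'/\sqrt2$, $B=\frac1{\sqrt2}\kappa\gamma'-\frac1{2\sqrt2}\gamma'''$. The LIEN flow is $\partial_t\gamma=-2\sqrt2(\kappa T+2B)$ for families $\gamma(s,t)$ of such curves. A null curve $\gamma$ is a stationary curve of the LIEN flow if its evolution by the flow (the solution with initial condition $\gamma$) is $(s,t)\mapsto A(t)\gamma(s+2\ell t)B(t)^{-1}$ for some $\ell\in\mathbb{R}$ and smooth $A,B:I\to{\rm SL}(2,\mathbb{R})$ with $A(0)=B(0)=I_2$. A prime denotes $d/ds$. *)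

theory Defs
  imports "HOL-Analysis.Analysis"
begin

text \<open>Anti-de Sitter 3-space AdS = SL(2,R), realised inside the 2x2 real matrices.\<close>

type_synonym mat2 = "real^2^2"

definition ads_ip :: "mat2 \<Rightarrow> mat2 \<Rightarrow> real" where
  "ads_ip X Y = - (det (X + Y) - det X - det Y) / 2"

text \<open>The timelike matrix J0 = [[0,-1],[1,0]] (q(J0) = -1) used for the time orientation:
  the left-invariant field X \<mapsto> X J0 is declared future-directed.\<close>
definition J0 :: mat2 where
  "J0 = vector [vector [0, -1], vector [1, 0]]"

fun vder :: "nat \<Rightarrow> (real \<Rightarrow> 'a::real_normed_vector) \<Rightarrow> real \<Rightarrow> 'a" where
  "vder 0 f = f"
| "vder (Suc n) f = (\<lambda>x. vector_derivative (vder n f) (at x))"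

definition Cinf_on :: "(real \<Rightarrow> 'a::real_normed_vector) \<Rightarrow> real set \<Rightarrow> bool" where
  "Cinf_on f S \<longleftrightarrow> (\<forall>n. \<forall>x\<in>S. vder n f differentiable (at x))"

text \<open>Future-directed, proper-time parametrized null curve without inflection points,
  defined on an open interval J.\<close>
definition null_curve :: "(real \<Rightarrow> mat2) \<Rightarrow> real set \<Rightarrow> bool" where
  "null_curve \<gamma> J \<longleftrightarrow> open J \<and> is_interval J \<and> J \<noteq> {} \<and> Cinf_on \<gamma> J \<and>
     (\<forall>s\<in>J. det (\<gamma> s) = 1
        \<and> vder 1 \<gamma> s \<noteq> 0
        \<and> ads_ip (vder 1 \<gamma> s) (vder 1 \<gamma> s) = 0
        \<and> ads_ip (vder 1 \<gamma> s) (\<gamma> s ** J0) < 0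
        \<and> ads_ip (vder 2 \<gamma> s) (vder 2 \<gamma> s) = 4)"

definition bending :: "(real \<Rightarrow> mat2) \<Rightarrow> real \<Rightarrow> real" where
  "bending \<gamma> s = - (1/16) * ads_ip (vder 3 \<gamma> s) (vder 3 \<gamma> s)"

definition frameT :: "(real \<Rightarrow> mat2) \<Rightarrow> real \<Rightarrow> mat2" where
  "frameT \<gamma> s = (1 / sqrt 2) *\<^sub>R vder 1 \<gamma> s"

definition frameB :: "(real \<Rightarrow> mat2) \<Rightarrow> real \<Rightarrow> mat2" where
  "frameB \<gamma> s = (bending \<gamma> s / sqrt 2) *\<^sub>R vder 1 \<gamma> s - (1 / (2 * sqrt 2)) *\<^sub>R vder 3 \<gamma> s"

definition lien_flow :: "(real \<Rightarrow> real \<Rightarrow> mat2) \<Rightarrow> (real \<times> real) set \<Rightarrow> bool" where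
  "lien_flow G D \<longleftrightarrow> open D \<and>
     (\<forall>t. {s. (s, t) \<in> D} \<noteq> {} \<longrightarrow> null_curve (\<lambda>s. G s t) {s. (s, t) \<in> D}) \<and>
     (\<forall>(s, t)\<in>D. ((\<lambda>\<tau>. G s \<tau>) has_vector_derivative
         (- 2 * sqrt 2) *\<^sub>R (bending (\<lambda>\<sigma>. G \<sigma> t) s *\<^sub>R frameT (\<lambda>\<sigma>. G \<sigma> t) s
                            + 2 *\<^sub>R frameB (\<lambda>\<sigma>. G \<sigma> t) s)) (at t))"

definition stat_evol :: "(real \<Rightarrow> mat2) \<Rightarrow> real \<Rightarrow> (real \<Rightarrow> mat2) \<Rightarrow> (real \<Rightarrow> mat2) \<Rightarrow> real \<Rightarrow> real \<Rightarrow> mat2" where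
  "stat_evol \<gamma> l A B = (\<lambda>s t. A t ** \<gamma> (s + 2 * l * t) ** matrix_inv (B t))"

definition evol_dom :: "real set \<Rightarrow> real \<Rightarrow> real set \<Rightarrow> (real \<times> real) set" where
  "evol_dom J l I = {(s, t). t \<in> I \<and> s + 2 * l * t \<in> J}"

definition stationary_LIEN :: "(real \<Rightarrow> mat2) \<Rightarrow> real set \<Rightarrow> real \<Rightarrow> (real \<Rightarrow> mat2) \<Rightarrow> (real \<Rightarrow> mat2) \<Rightarrow> real set \<Rightarrow> bool" where
  "stationary_LIEN \<gamma> J l A B I \<longleftrightarrow>
     open I \<and> is_interval I \<and> 0 \<in> I \<and>
     Cinf_on A I \<and> Cinf_on B I \<and> (\<forall>t\<in>I. det (A t) = 1 \<and> det (B t) = 1) \<and>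
     A 0 = mat 1 \<and> B 0 = mat 1 \<and>
     lien_flow (stat_evol \<gamma> l A B) (evol_dom J l I)"

end

theory Submission imports Defs begin

lemma ads_ip_eq: "ads_ip X Y = -(X$1$1*Y$2$2 + Y$1$1*X$2$2 - X$1$2*Y$2$1 - Y$1$2*X$2$1)/2"
  unfolding ads_ip_def det_2 by (simp add: algebra_simps)

lemma ads_ip_sym: "ads_ip X Y = ads_ip Y X"
  unfolding ads_ip_eq by (simp add: algebra_simps)

lemma ads_ip_self: "ads_ip X X = - det X"
  unfolding ads_ip_eq det_2 by (simp add: field_simps)

lemma bilinear_ads_ip: "bilinear ads_ip"
  unfolding bilinear_def by (auto intro!: linearI simp: ads_ip_eq field_simps)

lemma bb_ads: "bounded_bilinear ads_ip"
  using bilinear_conv_bounded_bilinear bilinear_ads_ip by blast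

lemma bilinear_mm: "bilinear ((**) :: mat2 \<Rightarrow> mat2 \<Rightarrow> mat2)"
  unfolding bilinear_def
  by (auto intro!: linearI simp: matrix_matrix_mult_def vec_eq_iff sum_2 algebra_simps)

lemma bb_mm: "bounded_bilinear ((**) :: mat2 \<Rightarrow> mat2 \<Rightarrow> mat2)"
  using bilinear_conv_bounded_bilinear bilinear_mm by blast

lemma ortho_zero:
  fixes e0 e1 e2 e3 X :: mat2
  assumes g: "ads_ip e0 e0 = -1" "ads_ip e0 e1 = 0" "ads_ip e0 e2 = 0" "ads_ip e0 e3 = 0"
    "ads_ip e1 e1 = 0" "ads_ip e1 e2 = 0" "ads_ip e1 e3 = -4" "ads_ip e2 e2 = 4" "ads_ip e2 e3 = 0"
    and x: "ads_ip X e0 = 0" "ads_ip X e1 = 0" "ads_ip X e2 = 0" "ads_ip X e3 = 0"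
  shows "X = 0"
proof -
  interpret bb: bounded_bilinear ads_ip by (rule bb_ads)
  have s: "ads_ip e1 e0 = 0" "ads_ip e2 e0 = 0" "ads_ip e3 e0 = 0" "ads_ip e2 e1 = 0"
    "ads_ip e3 e1 = -4" "ads_ip e3 e2 = 0" using g ads_ip_sym by metis+
  have d: "e0 \<noteq> e1" "e0 \<noteq> e2" "e0 \<noteq> e3" "e1 \<noteq> e2" "e1 \<noteq> e3" "e2 \<noteq> e3"
    using g s by auto
  let ?B = "{e0, e1, e2, e3}"
  have ind: "independent ?B"
  proof
    assume "dependent ?B"
    then obtain u where u: "\<exists>v\<in>?B. u v \<noteq> 0" and su: "(\<Sum>v\<in>?B. u v *\<^sub>R v) = 0"
      using dependent_finite[of ?B] by auto
    have w: "u e0 *\<^sub>R e0 + u e1 *\<^sub>R e1 + u e2 *\<^sub>R e2 + u e3 *\<^sub>R e3 = 0"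
      using su d by (simp add: add.assoc)
    let ?w = "u e0 *\<^sub>R e0 + u e1 *\<^sub>R e1 + u e2 *\<^sub>R e2 + u e3 *\<^sub>R e3"
    have "ads_ip ?w e0 = 0" "ads_ip ?w e1 = 0" "ads_ip ?w e2 = 0" "ads_ip ?w e3 = 0"
      using w by (simp_all add: bb.zero_left)
    then have "u e0 = 0" "u e3 = 0" "u e2 = 0" "u e1 = 0"
      by (simp_all add: bb.add_left bb.scaleR_left g s)
    then show False using u by auto
  qed
  have "card ?B = dim (UNIV :: mat2 set)" using d by simp
  then have sp: "UNIV \<subseteq> span ?B" using card_eq_dim[of ?B UNIV] ind by simp
  have lin: "linear (\<lambda>y. ads_ip X y)" using bilinear_ads_ip unfolding bilinear_def by simp
  have all: "ads_ip X y = 0" for y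
    using linear_eq_0_on_span[OF lin, of ?B y] sp x by auto
  let ?Y = "vector [vector [X$2$2, - X$2$1], vector [- X$1$2, X$1$1]] :: mat2"
  have "ads_ip X ?Y = 0" by (rule all)
  then have "(X$1$1)^2 + (X$2$2)^2 + (X$1$2)^2 + (X$2$1)^2 = 0"
    by (simp add: ads_ip_eq power2_eq_square algebra_simps)
  then have "X$1$1 = 0 \<and> X$2$2 = 0 \<and> X$1$2 = 0 \<and> X$2$1 = 0"
    by (smt (verit) zero_le_power2 power_zero_numeral zero_eq_power2)
  then show ?thesis by (simp add: vec_eq_iff forall_2)
qed


lemma vder_hvd: "Cinf_on f S \<Longrightarrow> s \<in> S \<Longrightarrow> (vder n f has_vector_derivative vder (Suc n) f s) (at s)"
  unfolding Cinf_on_def by (simp add: vector_derivative_works[symmetric])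

lemma ip_hrd:
  assumes "(f has_vector_derivative f') (at s)" "(g has_vector_derivative g') (at s)"
  shows "((\<lambda>x. ads_ip (f x) (g x)) has_real_derivative (ads_ip f' (g s) + ads_ip (f s) g')) (at s)"
  using bounded_bilinear.has_vector_derivative[OF bb_ads assms]
  unfolding has_real_derivative_iff_has_vector_derivative by (simp add: add.commute)

lemma hrd_unique_open:
  assumes "open S" "s \<in> S" "\<And>x. x \<in> S \<Longrightarrow> f x = g x"
    "(f has_real_derivative a) (at s)" "(g has_real_derivative b) (at s)"
  shows "a = b"
proof -
  have "(g has_real_derivative a) (at s)"
    using has_field_derivative_transform_within_open[OF assms(4,1,2)] assms(3) by blast
  then show ?thesis using assms(5) DERIV_unique by blast
qed

lemma hvd_unique_open:
  assumes "open S" "s \<in> S" "\<And>x. x \<in> S \<Longrightarrow> f x = g x"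
    "(f has_vector_derivative a) (at s)" "(g has_vector_derivative b) (at s)"
  shows "a = b"
proof -
  have "(g has_vector_derivative a) (at s)"
    using has_vector_derivative_transform_within_open[OF assms(4,1,2)] assms(3) by blast
  then show ?thesis using assms(5) vector_derivative_unique_at by blast
qed

lemma skew:
  fixes a b X :: mat2
  assumes "a$1$1 + a$2$2 = 0" "b$1$1 + b$2$2 = 0"
  shows "ads_ip (a ** X - X ** b) X = 0"
proof -
  have a: "a$1$1 = - a$2$2" and b: "b$1$1 = - b$2$2" using assms by linarith+
  show ?thesis unfolding ads_ip_eq by (simp add: matrix_matrix_mult_def sum_2 a b algebra_simps)
qed


lemma part1:
  fixes \<gamma> :: "real \<Rightarrow> mat2" and a b :: mat2
  assumes nc: "null_curve \<gamma> J"
    and tr: "a$1$1 + a$2$2 = 0" "b$1$1 + b$2$2 = 0"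
    and V: "\<forall>s\<in>J. a ** \<gamma> s - \<gamma> s ** b
              = 2 *\<^sub>R vder 3 \<gamma> s - (6 * bending \<gamma> s + 2 * l) *\<^sub>R vder 1 \<gamma> s"
    and sJ: "s \<in> J"
  shows "(deriv ^^ 3) (bending \<gamma>) s + 2 * l * deriv (bending \<gamma>) s
                 - 6 * bending \<gamma> s * deriv (bending \<gamma>) s = 0
       \<and> (bending \<gamma> has_real_derivative deriv (bending \<gamma>) s) (at s)"
proof -
  interpret bb: bounded_bilinear ads_ip by (rule bb_ads)
  have oJ: "open J" and ci: "Cinf_on \<gamma> J" using nc unfolding null_curve_def by auto
  have pt: "\<And>s. s \<in> J \<Longrightarrow> det (\<gamma> s) = 1 \<and> ads_ip (vder 1 \<gamma> s) (vder 1 \<gamma> s) = 0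
      \<and> ads_ip (vder 2 \<gamma> s) (vder 2 \<gamma> s) = 4" using nc unfolding null_curve_def by auto
  have hd: "\<And>n s. s \<in> J \<Longrightarrow> (vder n \<gamma> has_vector_derivative vder (Suc n) \<gamma> s) (at s)"
    using vder_hvd[OF ci] by blast
  define g where "g = (\<lambda>i j s. ads_ip (vder i \<gamma> s) (vder j \<gamma> s))"
  have gd: "\<And>i j s. s \<in> J \<Longrightarrow> (g i j has_real_derivative g (Suc i) j s + g i (Suc j) s) (at s)"
    unfolding g_def using ip_hrd[OF hd hd] by simp
  have gs: "\<And>i j s. g i j s = g j i s" unfolding g_def using ads_ip_sym by blast
  have cst: "\<And>f c d s. (\<And>x. x \<in> J \<Longrightarrow> f x = c) \<Longrightarrow> s \<in> J \<Longrightarrow> (f has_real_derivative d) (at s) \<Longrightarrow> d = 0"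
    using hrd_unique_open[OF oJ] DERIV_const by metis
  have g00: "\<And>s. s \<in> J \<Longrightarrow> g 0 0 s = -1" unfolding g_def using pt by (simp add: ads_ip_self)
  have g11: "\<And>s. s \<in> J \<Longrightarrow> g 1 1 s = 0" unfolding g_def using pt by simp
  have g22: "\<And>s. s \<in> J \<Longrightarrow> g 2 2 s = 4" unfolding g_def using pt by simp
  have g01: "\<And>s. s \<in> J \<Longrightarrow> g 0 1 s = 0"
    using cst[OF g00 _ gd[of _ 0 0]] gs[of 1 0] by simp
  have g12: "\<And>s. s \<in> J \<Longrightarrow> g 1 2 s = 0"
    using cst[OF g11 _ gd[of _ 1 1]] gs[of 2 1] by (simp add: numeral_2_eq_2)
  have g23: "\<And>s. s \<in> J \<Longrightarrow> g 2 3 s = 0"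
    using cst[OF g22 _ gd[of _ 2 2]] gs[of 3 2] by (simp add: numeral_3_eq_3 numeral_2_eq_2)
  have g02: "\<And>s. s \<in> J \<Longrightarrow> g 0 2 s = 0"
    using cst[OF g01 _ gd[of _ 0 1]] g11 by (simp add: numeral_2_eq_2)
  have g03: "\<And>s. s \<in> J \<Longrightarrow> g 0 3 s = 0"
    using cst[OF g02 _ gd[of _ 0 2]] g12 by (simp add: numeral_3_eq_3 numeral_2_eq_2)
  have g13: "\<And>s. s \<in> J \<Longrightarrow> g 1 3 s = -4"
    using cst[OF g12 _ gd[of _ 1 2]] g22 by (fastforce simp: numeral_3_eq_3 numeral_2_eq_2)
  have g04: "\<And>s. s \<in> J \<Longrightarrow> g 0 4 s = 4"
    using cst[OF g03 _ gd[of _ 0 3]] g13 by (simp add: numeral_3_eq_3 numeral_2_eq_2 eval_nat_numeral)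
  have g14: "\<And>s. s \<in> J \<Longrightarrow> g 1 4 s = 0"
    using cst[OF g13 _ gd[of _ 1 3]] g23 by (simp add: numeral_3_eq_3 numeral_2_eq_2 eval_nat_numeral)
  have g24: "\<And>s. s \<in> J \<Longrightarrow> g 2 4 s = - g 3 3 s"
    using cst[OF g23 _ gd[of _ 2 3]] by (fastforce simp: numeral_3_eq_3 numeral_2_eq_2 eval_nat_numeral)
  define k1 where "k1 = (\<lambda>s. -(1/8) * g 3 4 s)"
  define k2 where "k2 = (\<lambda>s. -(1/8) * (g 4 4 s + g 3 5 s))"
  define k3 where "k3 = (\<lambda>s. -(1/8) * ((g 5 4 s + g 4 5 s) + (g 4 5 s + g 3 6 s)))"
  have kap: "bending \<gamma> = (\<lambda>s. -(1/16) * g 3 3 s)"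
    unfolding bending_def g_def by simp
  have dk0: "\<And>s. s \<in> J \<Longrightarrow> (bending \<gamma> has_real_derivative k1 s) (at s)"
  proof -
    fix s assume "s \<in> J"
    from DERIV_cmult[OF gd[OF this, of 3 3], of "-(1/16)"]
    show "(bending \<gamma> has_real_derivative k1 s) (at s)"
      unfolding kap k1_def using gs[of 4 3 s] by (simp add: eval_nat_numeral)
  qed
  have dk1: "\<And>s. s \<in> J \<Longrightarrow> (k1 has_real_derivative k2 s) (at s)"
  proof -
    fix s assume "s \<in> J"
    from DERIV_cmult[OF gd[OF this, of 3 4], of "-(1/8)"]
    show "(k1 has_real_derivative k2 s) (at s)"
      unfolding k1_def k2_def by (simp add: eval_nat_numeral)
  qed
  have dk2: "\<And>s. s \<in> J \<Longrightarrow> (k2 has_real_derivative k3 s) (at s)"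
  proof -
    fix s assume "s \<in> J"
    from DERIV_cmult[OF DERIV_add[OF gd[OF this, of 4 4] gd[OF this, of 3 5]], of "-(1/8)"]
    show "(k2 has_real_derivative k3 s) (at s)"
      unfolding k2_def k3_def by (simp add: eval_nat_numeral)
  qed
  have frenet: "\<And>s. s \<in> J \<Longrightarrow> vder 4 \<gamma> s = (-4) *\<^sub>R vder 0 \<gamma> s + (2 * k1 s) *\<^sub>R vder 1 \<gamma> s
                                          + (4 * bending \<gamma> s) *\<^sub>R vder 2 \<gamma> s"
  proof -
    fix s assume s: "s \<in> J"
    let ?X = "vder 4 \<gamma> s - ((-4) *\<^sub>R vder 0 \<gamma> s + (2 * k1 s) *\<^sub>R vder 1 \<gamma> s
                                          + (4 * bending \<gamma> s) *\<^sub>R vder 2 \<gamma> s)"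
    have "?X = 0"
    proof (rule ortho_zero[of "vder 0 \<gamma> s" "vder 1 \<gamma> s" "vder 2 \<gamma> s" "vder 3 \<gamma> s"])
      show "ads_ip (vder 0 \<gamma> s) (vder 0 \<gamma> s) = - 1" "ads_ip (vder 0 \<gamma> s) (vder 1 \<gamma> s) = 0"
        "ads_ip (vder 0 \<gamma> s) (vder 2 \<gamma> s) = 0" "ads_ip (vder 0 \<gamma> s) (vder 3 \<gamma> s) = 0"
        "ads_ip (vder 1 \<gamma> s) (vder 1 \<gamma> s) = 0" "ads_ip (vder 1 \<gamma> s) (vder 2 \<gamma> s) = 0"
        "ads_ip (vder 1 \<gamma> s) (vder 3 \<gamma> s) = - 4" "ads_ip (vder 2 \<gamma> s) (vder 2 \<gamma> s) = 4"
        "ads_ip (vder 2 \<gamma> s) (vder 3 \<gamma> s) = 0"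
        using g00[OF s] g01[OF s] g02[OF s] g03[OF s] g11[OF s] g12[OF s] g13[OF s] g22[OF s] g23[OF s]
        unfolding g_def by auto
      have e: "ads_ip (vder 4 \<gamma> s) (vder j \<gamma> s) = g j 4 s" "ads_ip (vder i \<gamma> s) (vder j \<gamma> s) = g i j s"
        for i j using gs unfolding g_def by auto
      show "ads_ip ?X (vder 0 \<gamma> s) = 0" "ads_ip ?X (vder 1 \<gamma> s) = 0"
        "ads_ip ?X (vder 2 \<gamma> s) = 0" "ads_ip ?X (vder 3 \<gamma> s) = 0"
        unfolding bb.diff_left bb.add_left bb.scaleR_left e
        using g00[OF s] g01[OF s] g02[OF s] g03[OF s] g11[OF s] g12[OF s] g13[OF s] g22[OF s]
          g23[OF s] g04[OF s] g14[OF s] g24[OF s] gs[of 1 0 s] gs[of 2 0 s] gs[of 2 1 s] gs[of 3 0 s]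
          gs[of 3 1 s] gs[of 3 2 s] gs[of 4 0 s] gs[of 4 1 s] gs[of 4 2 s] gs[of 4 3 s]
        by (simp_all add: k1_def kap)
    qed
    then show "?thesis s" by simp
  qed
  define K where "K = (\<lambda>X::mat2. a ** X - X ** b)"
  have blK: "bounded_linear K" unfolding K_def
    by (intro bounded_linear_sub bounded_bilinear.bounded_linear_right[OF bb_mm]
        bounded_bilinear.bounded_linear_left[OF bb_mm])
  have hK: "\<And>n s. s \<in> J \<Longrightarrow> ((\<lambda>x. K (vder n \<gamma> x)) has_vector_derivative K (vder (Suc n) \<gamma> s)) (at s)"
    using bounded_linear.has_vector_derivative[OF blK hd] by blast
  have sc: "\<And>c c' f f' s. (c has_real_derivative c') (at s) \<Longrightarrow> (f has_vector_derivative f') (at s)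
     \<Longrightarrow> ((\<lambda>x. c x *\<^sub>R f x) has_vector_derivative (c s *\<^sub>R f' + c' *\<^sub>R f s)) (at s)"
    by (rule has_vector_derivative_scaleR)
  note hva = has_vector_derivative_add
  let ?k = "bending \<gamma>"
  have W0: "\<And>x. x \<in> J \<Longrightarrow> K (vder 0 \<gamma> x) = 2 *\<^sub>R vder 3 \<gamma> x - (6 * ?k x + 2 * l) *\<^sub>R vder 1 \<gamma> x"
    using V unfolding K_def by simp
  have W1: "\<And>s. s \<in> J \<Longrightarrow> K (vder 1 \<gamma> s) = (-8) *\<^sub>R vder 0 \<gamma> s + (-2 * k1 s) *\<^sub>R vder 1 \<gamma> s
                  + (2 * ?k s - 2 * l) *\<^sub>R vder 2 \<gamma> s"
  proof -
    fix s assume s: "s \<in> J"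
    have c1: "((\<lambda>x. 2::real) has_real_derivative 0) (at s)" by simp
    have c2: "((\<lambda>x. 6 * ?k x + 2 * l) has_real_derivative 6 * k1 s) (at s)"
      using dk0[OF s] by (auto intro!: derivative_eq_intros)
    have "((\<lambda>x. 2 *\<^sub>R vder 3 \<gamma> x - (6 * ?k x + 2 * l) *\<^sub>R vder 1 \<gamma> x) has_vector_derivative
        ((2 *\<^sub>R vder 4 \<gamma> s + 0 *\<^sub>R vder 3 \<gamma> s) - ((6 * ?k s + 2 * l) *\<^sub>R vder 2 \<gamma> s + (6 * k1 s) *\<^sub>R vder 1 \<gamma> s))) (at s)"
      using has_vector_derivative_diff[OF sc[OF c1 hd[OF s, of 3]] sc[OF c2 hd[OF s, of 1]]]
      by (simp add: eval_nat_numeral)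
    then have "K (vder 1 \<gamma> s) = (2 *\<^sub>R vder 4 \<gamma> s + 0 *\<^sub>R vder 3 \<gamma> s) - ((6 * ?k s + 2 * l) *\<^sub>R vder 2 \<gamma> s + (6 * k1 s) *\<^sub>R vder 1 \<gamma> s)"
      using hvd_unique_open[OF oJ s W0 hK[OF s, of 0]] by simp
    moreover have "(2 *\<^sub>R vder 4 \<gamma> s + 0 *\<^sub>R vder 3 \<gamma> s) - ((6 * ?k s + 2 * l) *\<^sub>R vder 2 \<gamma> s + (6 * k1 s) *\<^sub>R vder 1 \<gamma> s)
      = (-8) *\<^sub>R vder 0 \<gamma> s + (-2 * k1 s) *\<^sub>R vder 1 \<gamma> s + (2 * ?k s - 2 * l) *\<^sub>R vder 2 \<gamma> s"
      unfolding frenet[OF s] by (simp add: vec_eq_iff forall_2 algebra_simps)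
    ultimately show "?thesis s" by simp
  qed
  have W2: "\<And>s. s \<in> J \<Longrightarrow> K (vder 2 \<gamma> s) = (-8 - 2 * k2 s) *\<^sub>R vder 1 \<gamma> s
                  + (2 * ?k s - 2 * l) *\<^sub>R vder 3 \<gamma> s"
  proof -
    fix s assume s: "s \<in> J"
    have c1: "((\<lambda>x. -8::real) has_real_derivative 0) (at s)" by simp
    have c2: "((\<lambda>x. -2 * k1 x) has_real_derivative -2 * k2 s) (at s)"
      using dk1[OF s] by (auto intro!: derivative_eq_intros)
    have c3: "((\<lambda>x. 2 * ?k x - 2 * l) has_real_derivative 2 * k1 s) (at s)"
      using dk0[OF s] by (auto intro!: derivative_eq_intros)
    have "((\<lambda>x. (-8) *\<^sub>R vder 0 \<gamma> x + (-2 * k1 x) *\<^sub>R vder 1 \<gamma> x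
                  + (2 * ?k x - 2 * l) *\<^sub>R vder 2 \<gamma> x) has_vector_derivative
        (((-8) *\<^sub>R vder 1 \<gamma> s + 0 *\<^sub>R vder 0 \<gamma> s) + ((-2 * k1 s) *\<^sub>R vder 2 \<gamma> s + (-2 * k2 s) *\<^sub>R vder 1 \<gamma> s)
          + ((2 * ?k s - 2 * l) *\<^sub>R vder 3 \<gamma> s + (2 * k1 s) *\<^sub>R vder 2 \<gamma> s))) (at s)"
      using hva[OF hva[OF sc[OF c1 hd[OF s, of 0]] sc[OF c2 hd[OF s, of 1]]] sc[OF c3 hd[OF s, of 2]]]
      by (simp add: eval_nat_numeral)
    then have "K (vder 2 \<gamma> s) = ((-8) *\<^sub>R vder 1 \<gamma> s + 0 *\<^sub>R vder 0 \<gamma> s) + ((-2 * k1 s) *\<^sub>R vder 2 \<gamma> s + (-2 * k2 s) *\<^sub>R vder 1 \<gamma> s)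
          + ((2 * ?k s - 2 * l) *\<^sub>R vder 3 \<gamma> s + (2 * k1 s) *\<^sub>R vder 2 \<gamma> s)"
      using hvd_unique_open[OF oJ s W1 hK[OF s, of 1]] by (simp add: eval_nat_numeral)
    then show "?thesis s" by (simp add: vec_eq_iff forall_2 algebra_simps)
  qed
  have W3: "K (vder 3 \<gamma> s) = ((-8 - 2 * k2 s) *\<^sub>R vder 2 \<gamma> s + (-2 * k3 s) *\<^sub>R vder 1 \<gamma> s)
                  + ((2 * ?k s - 2 * l) *\<^sub>R vder 4 \<gamma> s + (2 * k1 s) *\<^sub>R vder 3 \<gamma> s)"
  proof -
    have c2: "((\<lambda>x. -8 - 2 * k2 x) has_real_derivative -2 * k3 s) (at s)"
      using dk2[OF sJ] by (auto intro!: derivative_eq_intros)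
    have c3: "((\<lambda>x. 2 * ?k x - 2 * l) has_real_derivative 2 * k1 s) (at s)"
      using dk0[OF sJ] by (auto intro!: derivative_eq_intros)
    have "((\<lambda>x. (-8 - 2 * k2 x) *\<^sub>R vder 1 \<gamma> x
                  + (2 * ?k x - 2 * l) *\<^sub>R vder 3 \<gamma> x) has_vector_derivative
        (((-8 - 2 * k2 s) *\<^sub>R vder 2 \<gamma> s + (-2 * k3 s) *\<^sub>R vder 1 \<gamma> s)
                  + ((2 * ?k s - 2 * l) *\<^sub>R vder 4 \<gamma> s + (2 * k1 s) *\<^sub>R vder 3 \<gamma> s))) (at s)"
      using hva[OF sc[OF c2 hd[OF sJ, of 1]] sc[OF c3 hd[OF sJ, of 3]]]
      by (simp add: eval_nat_numeral)
    then show ?thesis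
      using hvd_unique_open[OF oJ sJ W2 hK[OF sJ, of 2]] by (simp add: eval_nat_numeral)
  qed
  have "ads_ip (K (vder 3 \<gamma> s)) (vder 3 \<gamma> s) = 0" unfolding K_def by (rule skew[OF tr])
  then have "(-8 - 2 * k2 s) * g 2 3 s + (-2 * k3 s) * g 1 3 s + (2 * ?k s - 2 * l) * g 4 3 s
      + (2 * k1 s) * g 3 3 s = 0"
    unfolding W3 bb.add_left bb.scaleR_left g_def by simp
  then have key: "k3 s + 2 * l * k1 s - 6 * ?k s * k1 s = 0"
    using g23[OF sJ] g13[OF sJ] gs[of 4 3 s] unfolding k1_def kap by (simp add: algebra_simps)
  have d1: "deriv ?k s = k1 s" using dk0[OF sJ] by (rule DERIV_imp_deriv)
  have d2: "(deriv ?k has_real_derivative k2 s) (at s)"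
    using has_field_derivative_transform_within_open[OF dk1[OF sJ] oJ sJ]
      DERIV_imp_deriv[OF dk0] by metis
  have d2': "\<And>x. x \<in> J \<Longrightarrow> deriv (deriv ?k) x = k2 x"
    using has_field_derivative_transform_within_open[OF dk1 oJ]
      DERIV_imp_deriv[OF dk0] DERIV_imp_deriv by metis
  have d3: "deriv (deriv (deriv ?k)) s = k3 s"
    using has_field_derivative_transform_within_open[OF dk2[OF sJ] oJ sJ] d2'
      DERIV_imp_deriv by metis
  show ?thesis using key d1 d3 dk0[OF sJ] by (simp add: numeral_3_eq_3)
qed


lemma minv:
  fixes M :: mat2
  assumes "det M \<noteq> 0"
  shows "matrix_inv M ** M = mat 1 \<and> M ** matrix_inv M = mat 1"
proof -
  have "invertible M" using assms invertible_det_nz by blast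
  then have "\<exists>A'. M ** A' = mat 1 \<and> A' ** M = mat 1" unfolding invertible_def .
  then show ?thesis unfolding matrix_inv_def using someI_ex by (metis (mono_tags, lifting))
qed

lemma minv1: "matrix_inv (mat 1 :: mat2) = mat 1"
  using minv[of "mat 1"] by (metis det_I matrix_mul_rid one_neq_zero)

lemma comp_hrd:
  fixes A :: "real \<Rightarrow> mat2" and i j :: 2
  assumes "(A has_vector_derivative a) (at t)"
  shows "((\<lambda>t. A t $ i $ j) has_real_derivative a $ i $ j) (at t)"
proof -
  have "bounded_linear (\<lambda>X::mat2. X $ i $ j)"
    using bounded_linear_compose[OF bounded_linear_vec_nth[of j] bounded_linear_vec_nth[of i]]
    by (simp add: o_def)
  from bounded_linear.has_vector_derivative[OF this assms]
  show ?thesis unfolding has_real_derivative_iff_has_vector_derivative .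
qed

lemma trace0:
  fixes A :: "real \<Rightarrow> mat2"
  assumes "open I" "0 \<in> I" "(A has_vector_derivative a) (at 0)" "\<And>t. t \<in> I \<Longrightarrow> det (A t) = 1"
    "A 0 = mat 1"
  shows "a$1$1 + a$2$2 = 0"
proof -
  have c: "\<And>i j. ((\<lambda>t. A t$i$j) has_real_derivative a$i$j) (at 0)" using comp_hrd[OF assms(3)] .
  have D: "((\<lambda>t. A t$1$1 * A t$2$2 - A t$1$2 * A t$2$1) has_real_derivative
      (A 0$1$1 * a$2$2 + a$1$1 * A 0$2$2 - (A 0$1$2 * a$2$1 + a$1$2 * A 0$2$1))) (at 0)"
    using DERIV_diff[OF DERIV_mult[OF c[of 1 1] c[of 2 2]] DERIV_mult[OF c[of 1 2] c[of 2 1]]]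
    by (simp add: algebra_simps)
  have "(A 0$1$1 * a$2$2 + a$1$1 * A 0$2$2 - (A 0$1$2 * a$2$1 + a$1$2 * A 0$2$1)) = 0"
    using hrd_unique_open[OF assms(1,2) _ D, of "\<lambda>_. 1" 0] assms(4) unfolding det_2 by auto
  then show ?thesis using assms(5) by (simp add: mat_def)
qed

lemma flow:
  fixes \<gamma> A B :: "real \<Rightarrow> mat2"
  assumes nc: "null_curve \<gamma> J" and st: "stationary_LIEN \<gamma> J l A B I"
  shows "\<exists>a b. a$1$1 + a$2$2 = 0 \<and> b$1$1 + b$2$2 = 0 \<and> (\<forall>s\<in>J. a ** \<gamma> s - \<gamma> s ** b
              = 2 *\<^sub>R vder 3 \<gamma> s - (6 * bending \<gamma> s + 2 * l) *\<^sub>R vder 1 \<gamma> s)"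
proof -
  have oI: "open I" and I0: "0 \<in> I" and cA: "Cinf_on A I" and cB: "Cinf_on B I"
    and dets: "\<And>t. t \<in> I \<Longrightarrow> det (A t) = 1 \<and> det (B t) = 1"
    and A0: "A 0 = mat 1" and B0: "B 0 = mat 1"
    and lf: "lien_flow (stat_evol \<gamma> l A B) (evol_dom J l I)"
    using st unfolding stationary_LIEN_def by auto
  have ci: "Cinf_on \<gamma> J" using nc unfolding null_curve_def by auto
  define a where "a = vder 1 A 0"
  define b where "b = vder 1 B 0"
  have hA: "(A has_vector_derivative a) (at 0)" using vder_hvd[OF cA I0, of 0] unfolding a_def by simp
  have hB: "(B has_vector_derivative b) (at 0)" using vder_hvd[OF cB I0, of 0] unfolding b_def by simp
  have ta: "a$1$1 + a$2$2 = 0" using trace0[OF oI I0 hA _ A0] dets by blast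
  have tb: "b$1$1 + b$2$2 = 0" using trace0[OF oI I0 hB _ B0] dets by blast
  define G where "G = stat_evol \<gamma> l A B"
  have G0: "(\<lambda>\<sigma>. G \<sigma> 0) = \<gamma>" unfolding G_def stat_evol_def A0 B0 minv1 by simp
  have V: "a ** \<gamma> s - \<gamma> s ** b = 2 *\<^sub>R vder 3 \<gamma> s - (6 * bending \<gamma> s + 2 * l) *\<^sub>R vder 1 \<gamma> s"
    if s: "s \<in> J" for s
  proof -
    have "(s, 0) \<in> evol_dom J l I" using s I0 unfolding evol_dom_def by simp
    moreover have "\<forall>(s, t)\<in>evol_dom J l I. ((\<lambda>\<tau>. G s \<tau>) has_vector_derivative
         (- 2 * sqrt 2) *\<^sub>R (bending (\<lambda>\<sigma>. G \<sigma> t) s *\<^sub>R frameT (\<lambda>\<sigma>. G \<sigma> t) s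
                            + 2 *\<^sub>R frameB (\<lambda>\<sigma>. G \<sigma> t) s)) (at t)"
      using lf unfolding lien_flow_def G_def by blast
    ultimately have h0': "((\<lambda>\<tau>. G s \<tau>) has_vector_derivative
         (- 2 * sqrt 2) *\<^sub>R (bending (\<lambda>\<sigma>. G \<sigma> 0) s *\<^sub>R frameT (\<lambda>\<sigma>. G \<sigma> 0) s
                            + 2 *\<^sub>R frameB (\<lambda>\<sigma>. G \<sigma> 0) s)) (at 0)" by fastforce
    then have h0: "((\<lambda>\<tau>. G s \<tau>) has_vector_derivative
         (- 2 * sqrt 2) *\<^sub>R (bending \<gamma> s *\<^sub>R frameT \<gamma> s + 2 *\<^sub>R frameB \<gamma> s)) (at 0)"
      unfolding G0 .
    have F: "(- 2 * sqrt 2) *\<^sub>R (bending \<gamma> s *\<^sub>R frameT \<gamma> s + 2 *\<^sub>R frameB \<gamma> s)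
        = 2 *\<^sub>R vder 3 \<gamma> s - (6 * bending \<gamma> s) *\<^sub>R vder 1 \<gamma> s"
      unfolding frameT_def frameB_def by (simp add: vec_eq_iff forall_2 field_simps)
    let ?F = "2 *\<^sub>R vder 3 \<gamma> s - (6 * bending \<gamma> s) *\<^sub>R vder 1 \<gamma> s"
    have eqI: "G s \<tau> ** B \<tau> = A \<tau> ** \<gamma> (s + 2 * l * \<tau>)" if "\<tau> \<in> I" for \<tau>
    proof -
      have "det (B \<tau>) \<noteq> 0" using dets[OF that] by simp
      then show ?thesis unfolding G_def stat_evol_def
        using minv by (metis matrix_mul_assoc matrix_mul_rid)
    qed
    have L: "((\<lambda>\<tau>. G s \<tau> ** B \<tau>) has_vector_derivative (G s 0 ** b + ?F ** B 0)) (at 0)"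
      using bounded_bilinear.has_vector_derivative[OF bb_mm h0[unfolded F] hB] .
    have hf: "((\<lambda>\<tau>. s + 2 * l * \<tau>) has_vector_derivative (2 * l)) (at 0)"
      unfolding has_real_derivative_iff_has_vector_derivative[symmetric]
      by (auto intro!: derivative_eq_intros)
    have hg: "(\<gamma> has_vector_derivative vder 1 \<gamma> s) (at ((\<lambda>\<tau>. s + 2 * l * \<tau>) 0))"
      using vder_hvd[OF ci s, of 0] by simp
    have hc: "((\<lambda>\<tau>. \<gamma> (s + 2 * l * \<tau>)) has_vector_derivative (2 * l) *\<^sub>R vder 1 \<gamma> s) (at 0)"
      using vector_diff_chain_at[OF hf hg] by (simp add: o_def)
    have R: "((\<lambda>\<tau>. A \<tau> ** \<gamma> (s + 2 * l * \<tau>)) has_vector_derivative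
        (A 0 ** ((2 * l) *\<^sub>R vder 1 \<gamma> s) + a ** \<gamma> (s + 2 * l * 0))) (at 0)"
      using bounded_bilinear.has_vector_derivative[OF bb_mm hA hc] .
    have E: "G s 0 ** b + ?F ** B 0 = A 0 ** ((2 * l) *\<^sub>R vder 1 \<gamma> s) + a ** \<gamma> (s + 2 * l * 0)"
      using hvd_unique_open[OF oI I0 eqI L R] by simp
    have "G s 0 = \<gamma> s" using G0 by meson
    then have "\<gamma> s ** b + ?F = (2 * l) *\<^sub>R vder 1 \<gamma> s + a ** \<gamma> s"
      using E A0 B0 by simp
    then show ?thesis by (simp add: algebra_simps vec_eq_iff forall_2)
  qed
  show ?thesis using ta tb V by blast
qed


lemma vder_L:
  fixes \<gamma> :: "real \<Rightarrow> mat2" and L :: "mat2 \<Rightarrow> mat2"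
  assumes L: "bounded_linear L" and oJ: "open J" and ci: "Cinf_on \<gamma> J"
  shows "\<sigma> + c \<in> J \<Longrightarrow> vder n (\<lambda>\<sigma>. L (\<gamma> (\<sigma> + c))) \<sigma> = L (vder n \<gamma> (\<sigma> + c))"
proof (induction n arbitrary: \<sigma>)
  case 0
  then show ?case by simp
next
  case (Suc n)
  define S where "S = {x. x + c \<in> J}"
  have "S = (\<lambda>x. x + c) -` J" unfolding S_def by auto
  moreover have "\<And>x. isCont (\<lambda>x. x + c) x" by (intro continuous_intros)
  ultimately have oS: "open S" using continuous_open_vimage[OF oJ] by metis
  have sS: "\<sigma> \<in> S" using Suc.prems unfolding S_def by simp
  have h1: "((\<lambda>x. x + c) has_vector_derivative 1) (at \<sigma>)"
    unfolding has_real_derivative_iff_has_vector_derivative[symmetric]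
    by (auto intro!: derivative_eq_intros)
  have h2: "(vder n \<gamma> has_vector_derivative vder (Suc n) \<gamma> (\<sigma> + c)) (at ((\<lambda>x. x + c) \<sigma>))"
    using vder_hvd[OF ci Suc.prems] by simp
  have h3: "((\<lambda>x. vder n \<gamma> (x + c)) has_vector_derivative vder (Suc n) \<gamma> (\<sigma> + c)) (at \<sigma>)"
    using vector_diff_chain_at[OF h1 h2] by (simp add: o_def)
  have h4: "((\<lambda>x. L (vder n \<gamma> (x + c))) has_vector_derivative L (vder (Suc n) \<gamma> (\<sigma> + c))) (at \<sigma>)"
    using bounded_linear.has_vector_derivative[OF L h3] .
  have h5: "(vder n (\<lambda>\<sigma>. L (\<gamma> (\<sigma> + c))) has_vector_derivative L (vder (Suc n) \<gamma> (\<sigma> + c))) (at \<sigma>)"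
    using has_vector_derivative_transform_within_open[OF h4 oS sS] Suc.IH unfolding S_def by simp
  show ?case using vector_derivative_at[OF h5] by simp
qed

lemma bend_inv:
  fixes \<gamma> :: "real \<Rightarrow> mat2" and M1 M2 :: mat2
  assumes nc: "null_curve \<gamma> J" and d: "det M1 = 1" "det M2 = 1" and sc: "\<sigma> + c \<in> J"
  shows "bending (\<lambda>\<sigma>. M1 ** \<gamma> (\<sigma> + c) ** M2) \<sigma> = bending \<gamma> (\<sigma> + c)"
proof -
  have oJ: "open J" and ci: "Cinf_on \<gamma> J" using nc unfolding null_curve_def by auto
  have L: "bounded_linear (\<lambda>X. M1 ** X ** M2)"
    using bounded_linear_compose[OF bounded_bilinear.bounded_linear_left[OF bb_mm, of M2]
        bounded_bilinear.bounded_linear_right[OF bb_mm, of M1]] by (simp add: o_def)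
  show ?thesis unfolding bending_def vder_L[OF L oJ ci sc] ads_ip_self
    by (simp add: det_mul d)
qed

lemma deriv_shift: "deriv (\<lambda>\<sigma>. F (\<sigma> + c)) x = deriv F (x + c)"
  by (simp add: deriv_def DERIV_shift)

lemma derivn_shift: "(deriv ^^ n) (\<lambda>\<sigma>. f (\<sigma> + c)) = (\<lambda>\<sigma>. (deriv ^^ n) f (\<sigma> + c))"
proof (induction n)
  case 0
  then show ?case by simp
next
  case (Suc n)
  show ?case by (simp add: Suc.IH deriv_shift)
qed

theorem mainTheorem4:
  fixes \<gamma> A B :: "real \<Rightarrow> real^2^2" and J I :: "real set" and l :: real
  assumes "null_curve \<gamma> J"
    and "stationary_LIEN \<gamma> J l A B I"
  shows "(\<forall>s\<in>J. (deriv ^^ 3) (bending \<gamma>) s + 2 * l * deriv (bending \<gamma>) s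
                 - 6 * bending \<gamma> s * deriv (bending \<gamma>) s = 0)
       \<and> (\<forall>(s, t)\<in>evol_dom J l I.
            bending (\<lambda>\<sigma>. stat_evol \<gamma> l A B \<sigma> t) s = bending \<gamma> (s + 2 * l * t))
       \<and> (\<forall>(s, t)\<in>evol_dom J l I.
            deriv (\<lambda>\<tau>. bending \<gamma> (s + 2 * l * \<tau>)) t
            + (deriv ^^ 3) (\<lambda>\<sigma>. bending \<gamma> (\<sigma> + 2 * l * t)) s
            - 6 * bending \<gamma> (s + 2 * l * t) * deriv (\<lambda>\<sigma>. bending \<gamma> (\<sigma> + 2 * l * t)) s = 0)"
proof -
  obtain a b where ab: "a$1$1 + a$2$2 = 0" "b$1$1 + b$2$2 = 0"
    "\<forall>s\<in>J. a ** \<gamma> s - \<gamma> s ** b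
              = 2 *\<^sub>R vder 3 \<gamma> s - (6 * bending \<gamma> s + 2 * l) *\<^sub>R vder 1 \<gamma> s"
    using flow[OF assms] by blast
  note P1 = part1[where l=l, OF assms(1) ab(1) ab(2) ab(3)]
  have dets: "\<And>t. t \<in> I \<Longrightarrow> det (A t) = 1 \<and> det (B t) = 1"
    using assms(2) unfolding stationary_LIEN_def by auto
  have C1: "\<forall>s\<in>J. (deriv ^^ 3) (bending \<gamma>) s + 2 * l * deriv (bending \<gamma>) s
                 - 6 * bending \<gamma> s * deriv (bending \<gamma>) s = 0" using P1 by blast
  have C2: "bending (\<lambda>\<sigma>. stat_evol \<gamma> l A B \<sigma> t) s = bending \<gamma> (s + 2 * l * t)"
    if "(s, t) \<in> evol_dom J l I" for s t
  proof -
    have t: "t \<in> I" and sJ: "s + 2 * l * t \<in> J" using that unfolding evol_dom_def by auto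
    have "det (B t) \<noteq> 0" using dets[OF t] by simp
    then have "det (matrix_inv (B t) ** B t) = 1" using minv by (simp add: det_I)
    then have di: "det (matrix_inv (B t)) = 1" using dets[OF t] by (simp add: det_mul)
    show ?thesis unfolding stat_evol_def
      using bend_inv[OF assms(1) _ di sJ, of "A t"] dets[OF t] by simp
  qed
  have C3: "deriv (\<lambda>\<tau>. bending \<gamma> (s + 2 * l * \<tau>)) t
            + (deriv ^^ 3) (\<lambda>\<sigma>. bending \<gamma> (\<sigma> + 2 * l * t)) s
            - 6 * bending \<gamma> (s + 2 * l * t) * deriv (\<lambda>\<sigma>. bending \<gamma> (\<sigma> + 2 * l * t)) s = 0"
    if "(s, t) \<in> evol_dom J l I" for s t
  proof -
    have sJ: "s + 2 * l * t \<in> J" using that unfolding evol_dom_def by auto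
    have hk: "(bending \<gamma> has_real_derivative deriv (bending \<gamma>) (s + 2 * l * t)) (at (s + 2 * l * t))"
      using P1[OF sJ] by blast
    have hf: "((\<lambda>\<tau>. s + 2 * l * \<tau>) has_real_derivative 2 * l) (at t)"
      by (auto intro!: derivative_eq_intros)
    have "deriv (\<lambda>\<tau>. bending \<gamma> (s + 2 * l * \<tau>)) t = deriv (bending \<gamma>) (s + 2 * l * t) * (2 * l)"
      using DERIV_imp_deriv[OF DERIV_chain2[OF hk hf]] .
    moreover have "(deriv ^^ 3) (\<lambda>\<sigma>. bending \<gamma> (\<sigma> + 2 * l * t)) s = (deriv ^^ 3) (bending \<gamma>) (s + 2 * l * t)"
      by (simp add: derivn_shift)
    moreover have "deriv (\<lambda>\<sigma>. bending \<gamma> (\<sigma> + 2 * l * t)) s = deriv (bending \<gamma>) (s + 2 * l * t)"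
      by (simp add: deriv_shift)
    ultimately show ?thesis using P1[OF sJ] by (simp add: algebra_simps)
  qed
  show ?thesis using C1 C2 C3 by blast
qed

end
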